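(* Fix a natural number $M\ge 1$. In the random coefficients perturbed utility model described in the context, suppose Assumptions 1–6 (as stated in the context) all hold with this same $M$. Then every $M$-th order moment of the random coefficients, \[ \int \beta_{k_1,\ell_1}\cdots\beta_{k_M,\ell_M}\,d\nu(\beta),\qquad k_m\in\{1,\dots,K\},\ \ell_m\in\{1,\dots,d_{k_m}\}, \] is identified. In addition, for each $\gamma\in\{1,\dots,K\}^{M+1}$, the partial derivative $\partial_\gamma V(0)$ is identified.
   Context: Model. There are $K$ goods. For each good $k\in\{1,\dots,K\}$ there is a covariate vector $x_k=(x_{k,1},\dots,x_{k,d_k})'\in\mathbb{R}^{d_k}$ and a random coefficient vector $\beta_k=(\beta_{k,1},\dots,\beta_{k,d_k})'\in\mathbb{R}^{d_k}$; write $x=(x_1',\dots,x_K')'\in\mathbb{R}^{d}$ with $d=\sum_k d_k$, and $\beta=(\beta_1',\dots,\beta_K')'$. Let $\varepsilon$ be an unobservable of unrestricted dimension taking values in a measurable space $E$, let $B\subseteq\mathbb{R}^K$ be a feasibility set and $D:B\times E\to\mathbb{R}\cup\{-\infty\}$ a disturbance. Choices $Y(x,\beta,\varepsilon)\in\mathbb{R}^K$ satisfy \[ Y(x,\beta,\varepsilon)\in\arg\max_{y\in B}\ \sum_{k=1}^K y_k(\beta_k'x_k)+D(y,\varepsilon) \] (the argmax being nonempty). The average structural function is $\overline{Y}(x)=\int Y(x,\beta,\varepsilon)\,d\tau(\beta,\varepsilon)$ for a probability measure $\tau$ on $(\beta,\varepsilon)$ not depending on $x$; $\overline{Y}_k$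 denotes its $k$-th component. Assumption 1 (slope–intercept independence): under $\tau$, $\beta$ and $\varepsilon$ are independent, i.e. $\tau=\nu\otimes\mu$ with $\nu$ a probability measure over $\beta$ and $\mu$ one over $\varepsilon$, and $\overline{Y}(x)$ is finite. Define $\overline{Y}(x,\beta)=\int Y(x,\beta,\varepsilon)\,d\mu(\varepsilon)$, so $\overline{Y}(x)=\int\overline{Y}(x,\beta)\,d\nu(\beta)$. Let $\overline{B}$ be the convex hull of $B$ and $\overline{D}(y)=\sup\{\int D(\tilde Y(\varepsilon),\varepsilon)\,d\mu(\varepsilon):\tilde Y:E\to B\text{ measurable},\ \int\tilde Y\,d\mu=y\}$ (with $\sup\emptyset=-\infty$). Assumption 2: (i) $\overline{Y}(x,\beta)$ is the unique element of (equivalently, equals) $\arg\max_{y\in\overline{B}}\sum_k y_k(\beta_k'x_k)+\overline{D}(y)$; (ii) $\overline{B}$ is nonempty, closed and convex; (iii) $\overline{D}:\mathbb{R}^K\to\mathbb{R}\cup\{-\infty\}$ is concave, upper semicontinuous, and finite at some $y\in\overline{B}$. Define the integrated indirect utility $V:\mathbb{R}^K\to\mathbb{R}$, $V(u)=\max_{y\in\overline{B}}\sum_k y_ku_k+\overline{D}(y)$. For $\gamma=(\gamma_1,\dots,\gamma_m)\in\{1,\dots,K\}^m$ write $\partial_\gamma V=\partial_{\gamma_1}\cdots\partial_{\gamma_m}V$, derivatives being with respect to the arguments of $V$. Assumption 3: all covariates $x_{k,\ell}$ are continuous, and each $x_k$ is a vector of regressors specific to good $k$ (it enters only the index $\beta_k'x_k$).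 Assumption 4 (for $M$): $\int\beta_{1,1}^M\,d\nu(\beta)$ is finite, known a priori, and nonzero. Assumption 5 (for $M$): (i) for each good $k$ and every $M$-th order partial derivative in $x$, integration and differentiation can be interchanged at $x=0$: $\partial_{x_{k_1,\ell_1}}\cdots\partial_{x_{k_M,\ell_M}}\overline{Y}_k(0)=\int\partial_{x_{k_1,\ell_1}}\cdots\partial_{x_{k_M,\ell_M}}\overline{Y}_k(0,\beta)\,d\nu(\beta)$; (ii) every $M$-th order moment $\int\beta_{k_1,\ell_1}\cdots\beta_{k_M,\ell_M}\,d\nu(\beta)$ exists and is finite; (iii) $V$ is $(M+1)$-times continuously differentiable in a neighborhood of $0$; (iv) $\partial_\gamma V(0)\neq0$ for each $\gamma\in\{1,\dots,K\}^{M+1}$; (v) $\overline{Y}(x)$ is known for $x$ in a neighborhood of $0$, or more generally on $H\cap\mathbb{R}^d_+$ for some neighborhood $H$ of $0$ (derivatives at $0$ then being one-sided). Assumption 6 (for $M$): for each tuple of good indices $(k_1,\dots,k_M)\in\{1,\dots,K\}^M$ there exist characteristic indices $\ell_m\in\{1,\dots,d_{k_m}\}$ such that $\int\beta_{k_1,\ell_1}\cdots\beta_{k_M,\ell_M}\,d\nu(\beta)$ exists and is nonzero (which indices is not assumed known). Identification: a quantity is identified if it is uniquely determined by the objects assumed known (the average structural function on the stated region and the quantities assumed known a priori), i.e. all model specifications $(B,D,\mu,\nu)$ satisfying the hypotheses and generating the same known objects yield the same value of the quantity. *)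

theory Defs
  imports "HOL-Probability.Probability"
begin

definition pdw :: "(real^'i) set \<Rightarrow> 'i \<Rightarrow> (real^'i \<Rightarrow> real) \<Rightarrow> real^'i \<Rightarrow> real" where
  "pdw S i f x = (SOME D. ((\<lambda>t. f (x + t *\<^sub>R axis i 1)) has_real_derivative D)
                            (at 0 within {t. x + t *\<^sub>R axis i 1 \<in> S}))"

fun pdl :: "(real^'i) set \<Rightarrow> 'i list \<Rightarrow> (real^'i \<Rightarrow> real) \<Rightarrow> real^'i \<Rightarrow> real" where
  "pdl S [] f = f"
| "pdl S (i # is) f = pdw S i (pdl S is f)"

definition Cn_on :: "nat \<Rightarrow> (real^'i \<Rightarrow> real) \<Rightarrow> (real^'i) set \<Rightarrow> bool" where
  "Cn_on n f N \<longleftrightarrow>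
     (\<forall>\<gamma>. length \<gamma> \<le> n \<longrightarrow> continuous_on N (pdl UNIV \<gamma> f)) \<and>
     (\<forall>\<gamma> i. length \<gamma> < n \<longrightarrow> (\<forall>u\<in>N.
        ((\<lambda>t. pdl UNIV \<gamma> f (u + t *\<^sub>R axis i 1)) has_real_derivative pdl UNIV (i # \<gamma>) f u) (at 0)))"

definition orthant :: "(real^'c) set" where
  "orthant = {x. \<forall>c. 0 \<le> x $ c}"

text \<open>Covariates are indexed by a finite type 'c, goods by a finite type 'k;
  good c is the good whose index covariate c enters (good-specific regressors).
  Index vector u_k = beta_k' x_k.\<close>
definition idx :: "('c::finite \<Rightarrow> 'k::finite) \<Rightarrow> real^'c \<Rightarrow> real^'c \<Rightarrow> real^'k" where
  "idx good x \<beta> = (\<chi> k. \<Sum>c | good c = k. \<beta> $ c * x $ c)"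

definition util :: "real^'k::finite \<Rightarrow> real^'k \<Rightarrow> ereal" where
  "util u y = ereal (\<Sum>k\<in>UNIV. y $ k * u $ k)"

definition argmax_set :: "'a set \<Rightarrow> ('a \<Rightarrow> ereal) \<Rightarrow> 'a set" where
  "argmax_set A f = {y\<in>A. \<forall>z\<in>A. f z \<le> f y}"

definition eint :: "'e measure \<Rightarrow> ('e \<Rightarrow> ereal) \<Rightarrow> ereal" where
  "eint \<mu> f = enn2ereal (\<integral>\<^sup>+ e. e2ennreal (f e) \<partial>\<mu>) - enn2ereal (\<integral>\<^sup>+ e. e2ennreal (- f e) \<partial>\<mu>)"

definition eint_defined :: "'e measure \<Rightarrow> ('e \<Rightarrow> ereal) \<Rightarrow> bool" where
  "eint_defined \<mu> f \<longleftrightarrow> f \<in> borel_measurable \<mu> \<and>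
     ((\<integral>\<^sup>+ e. e2ennreal (f e) \<partial>\<mu>) \<noteq> \<infinity> \<or> (\<integral>\<^sup>+ e. e2ennreal (- f e) \<partial>\<mu>) \<noteq> \<infinity>)"

text \<open>Integrated disturbance Dbar (sup of the empty set is -infinity).\<close>
definition Dbar :: "'e measure \<Rightarrow> (real^'k::finite) set \<Rightarrow> (real^'k \<Rightarrow> 'e \<Rightarrow> ereal) \<Rightarrow> real^'k \<Rightarrow> ereal" where
  "Dbar \<mu> B D y = Sup {eint \<mu> (\<lambda>e. D (Yt e) e) | Yt.
       Yt \<in> borel_measurable \<mu> \<and> (\<forall>e\<in>space \<mu>. Yt e \<in> B) \<and>
       integrable \<mu> Yt \<and> integral\<^sup>L \<mu> Yt = y \<and> eint_defined \<mu> (\<lambda>e. D (Yt e) e)}"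

definition Vsup :: "'e measure \<Rightarrow> (real^'k::finite) set \<Rightarrow> (real^'k \<Rightarrow> 'e \<Rightarrow> ereal) \<Rightarrow> real^'k \<Rightarrow> ereal" where
  "Vsup \<mu> B D u = (SUP y \<in> convex hull B. util u y + Dbar \<mu> B D y)"

text \<open>Integrated indirect utility V (real valued; its well-definedness as a finite
  maximum is part of the hypotheses, see V_welldef).\<close>
definition Vfun :: "'e measure \<Rightarrow> (real^'k::finite) set \<Rightarrow> (real^'k \<Rightarrow> 'e \<Rightarrow> ereal) \<Rightarrow> real^'k \<Rightarrow> real" where
  "Vfun \<mu> B D u = real_of_ereal (Vsup \<mu> B D u)"

definition V_welldef :: "'e measure \<Rightarrow> (real^'k::finite) set \<Rightarrow> (real^'k \<Rightarrow> 'e \<Rightarrow> ereal) \<Rightarrow> bool" where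
  "V_welldef \<mu> B D \<longleftrightarrow> (\<forall>u. \<bar>Vsup \<mu> B D u\<bar> \<noteq> \<infinity> \<and>
      (\<exists>y\<in>convex hull B. util u y + Dbar \<mu> B D y = Vsup \<mu> B D u))"

definition Ybar_b :: "'e measure \<Rightarrow> (real^'c \<Rightarrow> real^'c \<Rightarrow> 'e \<Rightarrow> real^'k::finite) \<Rightarrow> real^'c \<Rightarrow> real^'c \<Rightarrow> real^'k" where
  "Ybar_b \<mu> Y x \<beta> = (\<integral>e. Y x \<beta> e \<partial>\<mu>)"

definition ASF :: "(real^'c) measure \<Rightarrow> 'e measure \<Rightarrow> (real^'c \<Rightarrow> real^'c \<Rightarrow> 'e \<Rightarrow> real^'k::finite) \<Rightarrow> real^'c \<Rightarrow> real^'k" where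
  "ASF \<nu> \<mu> Y x = (\<integral>z. Y x (fst z) (snd z) \<partial>(\<nu> \<Otimes>\<^sub>M \<mu>))"

definition model :: "('c::finite \<Rightarrow> 'k::finite) \<Rightarrow> (real^'k) set \<Rightarrow> (real^'k \<Rightarrow> 'e \<Rightarrow> ereal)
    \<Rightarrow> 'e measure \<Rightarrow> (real^'c) measure \<Rightarrow> (real^'c \<Rightarrow> real^'c \<Rightarrow> 'e \<Rightarrow> real^'k) \<Rightarrow> bool" where
  "model good B D \<mu> \<nu> Y \<longleftrightarrow>
     prob_space \<mu> \<and> prob_space \<nu> \<and> sets \<nu> = sets borel \<and>
     (\<forall>y\<in>B. \<forall>e\<in>space \<mu>. D y e \<noteq> \<infinity>) \<and>
     (\<forall>x \<beta>. \<forall>e\<in>space \<mu>. Y x \<beta> e \<in> argmax_set B (\<lambda>y. util (idx good x \<beta>) y + D y e))"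

text \<open>Assumption 1 (independence is built in via the product measure): ASF finite.\<close>
definition assm1 :: "'e measure \<Rightarrow> (real^'c::finite) measure \<Rightarrow> (real^'c \<Rightarrow> real^'c \<Rightarrow> 'e \<Rightarrow> real^'k::finite) \<Rightarrow> bool" where
  "assm1 \<mu> \<nu> Y \<longleftrightarrow> (\<forall>x. integrable (\<nu> \<Otimes>\<^sub>M \<mu>) (\<lambda>z. Y x (fst z) (snd z)))"

definition assm2 :: "('c::finite \<Rightarrow> 'k::finite) \<Rightarrow> (real^'k) set \<Rightarrow> (real^'k \<Rightarrow> 'e \<Rightarrow> ereal)
    \<Rightarrow> 'e measure \<Rightarrow> (real^'c \<Rightarrow> real^'c \<Rightarrow> 'e \<Rightarrow> real^'k) \<Rightarrow> bool" where
  "assm2 good B D \<mu> Y \<longleftrightarrow>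
     \<comment> \<open>(i)\<close>
     (\<forall>x \<beta>. integrable \<mu> (Y x \<beta>) \<and>
        argmax_set (convex hull B) (\<lambda>y. util (idx good x \<beta>) y + Dbar \<mu> B D y) = {Ybar_b \<mu> Y x \<beta>}) \<and>
     \<comment> \<open>(ii)\<close>
     convex hull B \<noteq> {} \<and> closed (convex hull B) \<and> convex (convex hull B) \<and>
     \<comment> \<open>(iii): concave (convex hypograph), upper semicontinuous, finite somewhere on conv B\<close>
     convex {(y, r::real). ereal r \<le> Dbar \<mu> B D y} \<and>
     (\<forall>y. Limsup (at y) (Dbar \<mu> B D) \<le> Dbar \<mu> B D y) \<and>
     (\<exists>y\<in>convex hull B. \<bar>Dbar \<mu> B D y\<bar> \<noteq> \<infinity>)"

definition moment :: "(real^'c) measure \<Rightarrow> 'c list \<Rightarrow> real" where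
  "moment \<nu> cs = (\<integral>\<beta>. (\<Prod>m<length cs. \<beta> $ (cs ! m)) \<partial>\<nu>)"

definition assm4 :: "'c \<Rightarrow> nat \<Rightarrow> (real^'c) measure \<Rightarrow> bool" where
  "assm4 c0 M \<nu> \<longleftrightarrow> integrable \<nu> (\<lambda>\<beta>. (\<beta> $ c0) ^ M) \<and> (\<integral>\<beta>. (\<beta> $ c0) ^ M \<partial>\<nu>) \<noteq> 0"

definition assm5 :: "(real^'c::finite) set \<Rightarrow> nat \<Rightarrow> (real^'k::finite) set \<Rightarrow> (real^'k \<Rightarrow> 'e \<Rightarrow> ereal)
    \<Rightarrow> 'e measure \<Rightarrow> (real^'c) measure \<Rightarrow> (real^'c \<Rightarrow> real^'c \<Rightarrow> 'e \<Rightarrow> real^'k) \<Rightarrow> bool" where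
  "assm5 S M B D \<mu> \<nu> Y \<longleftrightarrow>
     \<comment> \<open>(i) interchange of M-th order differentiation (within S) and integration at x = 0\<close>
     (\<forall>k cs. length cs = M \<longrightarrow>
        integrable \<nu> (\<lambda>\<beta>. pdl S cs (\<lambda>x. Ybar_b \<mu> Y x \<beta> $ k) 0) \<and>
        pdl S cs (\<lambda>x. ASF \<nu> \<mu> Y x $ k) 0 = (\<integral>\<beta>. pdl S cs (\<lambda>x. Ybar_b \<mu> Y x \<beta> $ k) 0 \<partial>\<nu>)) \<and>
     \<comment> \<open>(ii)\<close>
     (\<forall>cs. length cs = M \<longrightarrow> integrable \<nu> (\<lambda>\<beta>. \<Prod>m<M. \<beta> $ (cs ! m))) \<and>
     \<comment> \<open>(iii)\<close>
     (\<exists>N. open N \<and> 0 \<in> N \<and> Cn_on (M + 1) (Vfun \<mu> B D) N) \<and>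
     \<comment> \<open>(iv)\<close>
     (\<forall>\<gamma>. length \<gamma> = M + 1 \<longrightarrow> pdl UNIV \<gamma> (Vfun \<mu> B D) 0 \<noteq> 0)"

definition assm6 :: "('c::finite \<Rightarrow> 'k::finite) \<Rightarrow> nat \<Rightarrow> (real^'c) measure \<Rightarrow> bool" where
  "assm6 good M \<nu> \<longleftrightarrow> (\<forall>ks. length ks = M \<longrightarrow> (\<exists>cs. length cs = M \<and>
      (\<forall>m<M. good (cs ! m) = ks ! m) \<and>
      integrable \<nu> (\<lambda>\<beta>. \<Prod>m<M. \<beta> $ (cs ! m)) \<and> (\<integral>\<beta>. (\<Prod>m<M. \<beta> $ (cs ! m)) \<partial>\<nu>) \<noteq> 0))"

definition spec_ok :: "('c::finite \<Rightarrow> 'k::finite) \<Rightarrow> 'c \<Rightarrow> nat \<Rightarrow> (real^'c) set \<Rightarrow> (real^'k) set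
    \<Rightarrow> (real^'k \<Rightarrow> 'e \<Rightarrow> ereal) \<Rightarrow> 'e measure \<Rightarrow> (real^'c) measure \<Rightarrow> (real^'c \<Rightarrow> real^'c \<Rightarrow> 'e \<Rightarrow> real^'k) \<Rightarrow> bool" where
  "spec_ok good c0 M S B D \<mu> \<nu> Y \<longleftrightarrow>
     model good B D \<mu> \<nu> Y \<and> assm1 \<mu> \<nu> Y \<and> assm2 good B D \<mu> Y \<and> V_welldef \<mu> B D \<and>
     assm4 c0 M \<nu> \<and> assm5 S M B D \<mu> \<nu> Y \<and> assm6 good M \<nu>"

end

theory Submission
  imports Defs
begin

lemma line_in_open:
  fixes x :: "real^'i"
  assumes "open H" "x \<in> H"
  shows "\<exists>d>0. \<forall>t. \<bar>t\<bar> < d \<longrightarrow> x + t *\<^sub>R axis i 1 \<in> H"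
proof -
  obtain r where r: "r > 0" "ball x r \<subseteq> H" using assms open_contains_ball by blast
  have "x + t *\<^sub>R axis i 1 \<in> H" if "\<bar>t\<bar> < r" for t
  proof -
    have "dist x (x + t *\<^sub>R axis i 1) = \<bar>t\<bar>"
      by (simp add: dist_norm)
    then show ?thesis using r that by auto
  qed
  then show ?thesis using r by blast
qed

lemma pdl_append: "pdl S (xs @ ys) f = pdl S xs (pdl S ys f)"
  by (induction xs) auto

lemma nontriv:
  fixes x :: "real^'i"
  assumes "S = UNIV \<or> S = orthant" "x \<in> S"
  shows "at (0::real) within {t. x + t *\<^sub>R axis i 1 \<in> S} \<noteq> bot"
proof -
  have sub: "{0<..} \<subseteq> {t. x + t *\<^sub>R axis i 1 \<in> S}"
    using assms by (auto simp: orthant_def axis_def)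
  have "at_right (0::real) \<le> at 0 within {t. x + t *\<^sub>R axis i 1 \<in> S}"
    using at_le[OF sub] .
  moreover have "at_right (0::real) \<noteq> bot" by simp
  ultimately show ?thesis by (metis bot.extremum_uniqueI)
qed

lemma pdw_eval:
  assumes "((\<lambda>t. f (x + t *\<^sub>R axis i 1)) has_real_derivative D) (at 0 within {t. x + t *\<^sub>R axis i 1 \<in> S})"
    and "at (0::real) within {t. x + t *\<^sub>R axis i 1 \<in> S} \<noteq> bot"
  shows "pdw S i f x = D"
  unfolding pdw_def
  by (rule some_equality, rule assms(1)) (use has_field_derivative_unique assms in blast)

lemma pdl_local:
  fixes F G :: "real^'i \<Rightarrow> real"
  assumes "open H" "\<forall>x\<in>H\<inter>S. F x = G x"
  shows "\<forall>x\<in>H\<inter>S. pdl S cs F x = pdl S cs G x"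
proof (induction cs)
  case Nil
  then show ?case using assms by simp
next
  case (Cons c cs)
  show ?case
  proof
    fix x assume x: "x \<in> H \<inter> S"
    obtain d where d: "d > 0" "\<forall>t. \<bar>t\<bar> < d \<longrightarrow> x + t *\<^sub>R axis c 1 \<in> H"
      using line_in_open[OF assms(1)] x by blast
    have ev: "eventually (\<lambda>t. pdl S cs F (x + t *\<^sub>R axis c 1) = pdl S cs G (x + t *\<^sub>R axis c 1))
        (at 0 within {t. x + t *\<^sub>R axis c 1 \<in> S})"
      unfolding eventually_at using d Cons.IH by (intro exI[of _ d]) (auto simp: dist_real_def)
    have e0: "pdl S cs F (x + 0 *\<^sub>R axis c 1) = pdl S cs G (x + 0 *\<^sub>R axis c 1)"
      using Cons.IH x by simp
    show "pdl S (c # cs) F x = pdl S (c # cs) G x"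
      using has_field_derivative_cong_eventually[OF ev e0] by (simp add: pdw_def)
  qed
qed

lemma idx_shift:
  "idx good (x + t *\<^sub>R axis c 1) \<beta> = idx good x \<beta> + (t * \<beta> $ c) *\<^sub>R axis (good c) 1"
proof -
  have "(\<Sum>c'\<in>{c'. good c' = k}. \<beta> $ c' * (x $ c' + t * axis c 1 $ c')) =
        (\<Sum>c'\<in>{c'. good c' = k}. \<beta> $ c' * x $ c') + t * \<beta> $ c * axis (good c) 1 $ k" for k
  proof -
    have "(\<Sum>c'\<in>{c'. good c' = k}. \<beta> $ c' * (x $ c' + t * axis c 1 $ c')) =
        (\<Sum>c'\<in>{c'. good c' = k}. \<beta> $ c' * x $ c') + (\<Sum>c'\<in>{c'. good c' = k}. if c' = c then t * \<beta> $ c else 0)"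
    proof -
      have "(\<Sum>c'\<in>{c'. good c' = k}. \<beta> $ c' * (x $ c' + t * axis c 1 $ c')) =
          (\<Sum>c'\<in>{c'. good c' = k}. \<beta> $ c' * x $ c' + (if c' = c then t * \<beta> $ c else 0))"
        by (rule sum.cong) (auto simp: axis_def algebra_simps)
      then show ?thesis by (simp add: sum.distrib)
    qed
    also have "(\<Sum>c'\<in>{c'. good c' = k}. if c' = c then t * \<beta> $ c else 0) = t * \<beta> $ c * axis (good c) 1 $ k"
    proof -
      have "(\<Sum>c'\<in>{c'. good c' = k}. if c' = c then t * \<beta> $ c else 0) =
          (if c \<in> {c'. good c' = k} then t * \<beta> $ c else 0)"
        by (simp only: sum.delta finite)
      then show ?thesis by (simp add: axis_def)
    qed
    finally show ?thesis .
  qed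
  then show ?thesis by (simp add: idx_def vec_eq_iff)
qed

lemma sum_axis:
  fixes y u :: "real^'k::finite"
  shows "(\<Sum>j\<in>UNIV. y $ j * (u + t *\<^sub>R axis k 1) $ j) = (\<Sum>j\<in>UNIV. y $ j * u $ j) + t * y $ k"
proof -
  have "(\<Sum>j\<in>UNIV. y $ j * (u + t *\<^sub>R axis k 1) $ j) =
      (\<Sum>j\<in>UNIV. y $ j * u $ j + (if j = k then t * y $ k else 0))"
    by (rule sum.cong) (auto simp: axis_def algebra_simps)
  also have "\<dots> = (\<Sum>j\<in>UNIV. y $ j * u $ j) + t * y $ k"
    by (simp add: sum.distrib)
  finally show ?thesis .
qed

lemma envelope:
  fixes u :: "real^'k::finite"
  assumes a2: "assm2 good B D \<mu> Y" and wd: "V_welldef \<mu> B D"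
    and der: "((\<lambda>t. Vfun \<mu> B D (u + t *\<^sub>R axis k 1)) has_real_derivative G) (at 0)"
    and u: "u = idx good x \<beta>"
  shows "Ybar_b \<mu> Y x \<beta> $ k = G"
proof -
  define y0 where "y0 = Ybar_b \<mu> Y x \<beta>"
  define Db where "Db = Dbar \<mu> B D"
  have am: "argmax_set (convex hull B) (\<lambda>y. util u y + Db y) = {y0}"
    using a2 u unfolding assm2_def y0_def Db_def by blast
  then have y0B: "y0 \<in> convex hull B" and y0max: "\<And>z. z \<in> convex hull B \<Longrightarrow> util u z + Db z \<le> util u y0 + Db y0"
    unfolding argmax_set_def by blast+
  have Vs_def': "\<And>v. Vsup \<mu> B D v = (SUP y \<in> convex hull B. util v y + Db y)"
    by (simp add: Vsup_def Db_def)
  have Vu: "Vsup \<mu> B D u = util u y0 + Db y0"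
    unfolding Vs_def'
    by (rule antisym) (auto intro!: SUP_least SUP_upper2[OF y0B] y0max)
  have fin: "\<And>v. \<bar>Vsup \<mu> B D v\<bar> \<noteq> \<infinity>" using wd by (simp add: V_welldef_def)
  obtain d where d: "Db y0 = ereal d"
  proof (cases "Db y0")
    case (real r) then show ?thesis using that by blast
  next
    case PInf then show ?thesis using Vu fin[of u] by (simp add: util_def)
  next
    case MInf then show ?thesis using Vu fin[of u] by (simp add: util_def)
  qed
  have Vfu: "Vfun \<mu> B D u = (\<Sum>j\<in>UNIV. y0 $ j * u $ j) + d"
    using Vu d by (simp add: Vfun_def util_def)
  have lower: "Vfun \<mu> B D v \<ge> (\<Sum>j\<in>UNIV. y0 $ j * v $ j) + d" for v
  proof -
    have "util v y0 + Db y0 \<le> Vsup \<mu> B D v"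
      unfolding Vs_def' by (rule SUP_upper[OF y0B])
    moreover obtain r where "Vsup \<mu> B D v = ereal r" using fin[of v] by (cases "Vsup \<mu> B D v") auto
    ultimately show ?thesis using d by (simp add: Vfun_def util_def)
  qed
  define g where "g t = Vfun \<mu> B D (u + t *\<^sub>R axis k 1) - t * y0 $ k" for t
  have dg: "(g has_real_derivative G - y0 $ k) (at 0)"
    unfolding g_def
    by (rule DERIV_diff[OF der]) (auto intro!: derivative_eq_intros)
  have "g 0 \<le> g t" for t
  proof -
    have "g 0 = (\<Sum>j\<in>UNIV. y0 $ j * u $ j) + d" using Vfu by (simp add: g_def)
    also have "\<dots> \<le> g t"
    proof -
      have L: "(\<Sum>j\<in>UNIV. y0 $ j * (u + t *\<^sub>R axis k 1) $ j) + d \<le> Vfun \<mu> B D (u + t *\<^sub>R axis k 1)"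
        by (rule lower)
      then show ?thesis unfolding g_def sum_axis by linarith
    qed
    finally show ?thesis .
  qed
  then have "G - y0 $ k = 0"
    using DERIV_local_min[OF dg, of 1] by auto
  then show ?thesis by (simp add: y0_def)
qed

lemma idx_cont: "continuous_on UNIV (\<lambda>x. idx good x \<beta>)"
  unfolding idx_def by (intro continuous_intros)

lemma U_open: "open N \<Longrightarrow> open {x. idx good x \<beta> \<in> N}"
proof -
  assume "open N"
  then have "open ((\<lambda>x. idx good x \<beta>) -` N)" by (rule open_vimage[OF _ idx_cont])
  then show ?thesis by (simp add: vimage_def)
qed

lemma chain:
  fixes F :: "real^'c::finite \<Rightarrow> real" and V :: "real^'k::finite \<Rightarrow> real"
    and good :: "'c \<Rightarrow> 'k"
  assumes S: "S = UNIV \<or> S = orthant" and N: "open N" and Cn: "Cn_on n V N"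
    and F: "\<forall>x\<in>{x. idx good x \<beta> \<in> N}. F x = pdl UNIV \<gamma> V (idx good x \<beta>)"
  shows "length cs + length \<gamma> \<le> n \<Longrightarrow> \<forall>x\<in>{x. idx good x \<beta> \<in> N} \<inter> S.
     pdl S cs F x = (\<Prod>m<length cs. \<beta> $ (cs!m)) * pdl UNIV (map good cs @ \<gamma>) V (idx good x \<beta>)"
proof (induction cs)
  case Nil
  then show ?case using F by simp
next
  case (Cons c cs)
  define U where "U = {x. idx good x \<beta> \<in> N}"
  have Uo: "open U" unfolding U_def by (rule U_open[OF N])
  have IH: "\<forall>x\<in>U \<inter> S. pdl S cs F x = (\<Prod>m<length cs. \<beta> $ (cs!m)) * pdl UNIV (map good cs @ \<gamma>) V (idx good x \<beta>)"
    using Cons by (simp add: U_def)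
  define P where "P = (\<Prod>m<length cs. \<beta> $ (cs!m))"
  define W where "W = pdl UNIV (map good cs @ \<gamma>) V"
  have Cd: "\<And>u. u \<in> N \<Longrightarrow> ((\<lambda>t. W (u + t *\<^sub>R axis (good c) 1)) has_real_derivative pdl UNIV (good c # map good cs @ \<gamma>) V u) (at 0)"
    using Cn Cons.prems unfolding Cn_on_def W_def by auto
  show ?case
  proof
    fix x assume x: "x \<in> {x. idx good x \<beta> \<in> N} \<inter> S"
    define u where "u = idx good x \<beta>"
    have uN: "u \<in> N" using x by (simp add: u_def)
    define T where "T = {t. x + t *\<^sub>R axis c 1 \<in> S}"
    have d1: "((\<lambda>t. W (u + (t * \<beta> $ c) *\<^sub>R axis (good c) 1)) has_real_derivative
        pdl UNIV (good c # map good cs @ \<gamma>) V u * \<beta> $ c) (at 0 within T)"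
    proof -
      have g: "((\<lambda>t. t * \<beta> $ c) has_real_derivative \<beta> $ c) (at 0 within T)"
        by (auto intro!: derivative_eq_intros)
      have f: "DERIV (\<lambda>s. W (u + s *\<^sub>R axis (good c) 1)) ((\<lambda>t. t * \<beta> $ c) 0) :> pdl UNIV (good c # map good cs @ \<gamma>) V u"
        using Cd[OF uN] by simp
      show ?thesis using DERIV_chain[OF f g] by (simp add: o_def)
    qed
    have d2: "((\<lambda>t. P * W (idx good (x + t *\<^sub>R axis c 1) \<beta>)) has_real_derivative
        P * (pdl UNIV (good c # map good cs @ \<gamma>) V u * \<beta> $ c)) (at 0 within T)"
      using DERIV_cmult[OF d1, of P] by (simp add: idx_shift u_def)
    obtain d where d: "d > 0" "\<forall>t. \<bar>t\<bar> < d \<longrightarrow> x + t *\<^sub>R axis c 1 \<in> U"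
      using line_in_open[OF Uo, of x c] x by (auto simp: U_def)
    have d3: "((\<lambda>t. pdl S cs F (x + t *\<^sub>R axis c 1)) has_real_derivative
        P * (pdl UNIV (good c # map good cs @ \<gamma>) V u * \<beta> $ c)) (at 0 within T)"
    proof (rule has_field_derivative_transform_within[OF d2 d(1)])
      show "0 \<in> T" using x by (simp add: T_def)
      fix t assume "t \<in> T" "dist t 0 < d"
      then have "x + t *\<^sub>R axis c 1 \<in> U \<inter> S" using d by (auto simp: T_def dist_real_def)
      then show "P * W (idx good (x + t *\<^sub>R axis c 1) \<beta>) = pdl S cs F (x + t *\<^sub>R axis c 1)"
        using IH by (simp add: P_def W_def)
    qed
    have "pdl S (c # cs) F x = P * (pdl UNIV (good c # map good cs @ \<gamma>) V u * \<beta> $ c)"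
      using pdw_eval[OF d3[unfolded T_def] nontriv[OF S]] x by simp
    then show "pdl S (c # cs) F x = (\<Prod>m<length (c # cs). \<beta> $ ((c # cs) ! m)) *
        pdl UNIV (map good (c # cs) @ \<gamma>) V (idx good x \<beta>)"
      by (simp add: prod.lessThan_Suc_shift P_def u_def del: prod.lessThan_Suc)
  qed
qed

lemma idx_zero: "idx good 0 \<beta> = 0"
  by (simp add: idx_def vec_eq_iff)

lemma zero_in_S: "S = UNIV \<or> S = orthant \<Longrightarrow> (0::real^'c) \<in> S"
  by (auto simp: orthant_def)

lemma formula:
  fixes good :: "'c::finite \<Rightarrow> 'k::finite"
  assumes S: "S = UNIV \<or> S = orthant" and ok: "spec_ok good c0 M S B D \<mu> \<nu> Y" and len: "length cs = M"
  shows "pdl S cs (\<lambda>x. ASF \<nu> \<mu> Y x $ k) 0 = pdl UNIV (map good cs @ [k]) (Vfun \<mu> B D) 0 * moment \<nu> cs"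
proof -
  have a5: "assm5 S M B D \<mu> \<nu> Y" and a2: "assm2 good B D \<mu> Y" and wd: "V_welldef \<mu> B D"
    using ok by (auto simp: spec_ok_def)
  obtain N where N: "open N" "0 \<in> N" "Cn_on (M + 1) (Vfun \<mu> B D) N"
    using a5 unfolding assm5_def by blast
  have int: "pdl S cs (\<lambda>x. ASF \<nu> \<mu> Y x $ k) 0 = (\<integral>\<beta>. pdl S cs (\<lambda>x. Ybar_b \<mu> Y x \<beta> $ k) 0 \<partial>\<nu>)"
    using a5 len unfolding assm5_def by blast
  have pt: "pdl S cs (\<lambda>x. Ybar_b \<mu> Y x \<beta> $ k) 0 =
      (\<Prod>m<length cs. \<beta> $ (cs!m)) * pdl UNIV (map good cs @ [k]) (Vfun \<mu> B D) 0" for \<beta>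
  proof -
    have F: "\<forall>x\<in>{x. idx good x \<beta> \<in> N}. Ybar_b \<mu> Y x \<beta> $ k = pdl UNIV [k] (Vfun \<mu> B D) (idx good x \<beta>)"
    proof
      fix x assume "x \<in> {x. idx good x \<beta> \<in> N}"
      then have "((\<lambda>t. pdl UNIV [] (Vfun \<mu> B D) (idx good x \<beta> + t *\<^sub>R axis k 1)) has_real_derivative
          pdl UNIV [k] (Vfun \<mu> B D) (idx good x \<beta>)) (at 0)"
        using N(3) unfolding Cn_on_def by (metis length_0_conv less_add_one mem_Collect_eq add_gr_0 zero_less_one)
      then show "Ybar_b \<mu> Y x \<beta> $ k = pdl UNIV [k] (Vfun \<mu> B D) (idx good x \<beta>)"
        using envelope[OF a2 wd _ refl] by simp
    qed
    have "\<forall>x\<in>{x. idx good x \<beta> \<in> N} \<inter> S. pdl S cs (\<lambda>x. Ybar_b \<mu> Y x \<beta> $ k) x =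
        (\<Prod>m<length cs. \<beta> $ (cs!m)) * pdl UNIV (map good cs @ [k]) (Vfun \<mu> B D) (idx good x \<beta>)"
      by (rule chain[OF S N(1) N(3) F]) (simp add: len)
    then show ?thesis using N(2) zero_in_S[OF S] by (simp add: idx_zero)
  qed
  show ?thesis unfolding int pt moment_def by simp
qed

lemma line_deriv:
  fixes f :: "real^'k \<Rightarrow> real"
  assumes "((\<lambda>t. f ((w + s0 *\<^sub>R e) + t *\<^sub>R e)) has_real_derivative D) (at 0)"
  shows "((\<lambda>s. f (w + s *\<^sub>R e)) has_real_derivative D) (at s0)"
proof -
  have "((\<lambda>t. f (w + (t + s0) *\<^sub>R e)) has_real_derivative D) (at 0)"
    using assms by (simp add: algebra_simps scaleR_add_left)
  then show ?thesis using DERIV_shift[of "\<lambda>s. f (w + s *\<^sub>R e)" D 0 s0] by simp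
qed

lemma mixed_mvt:
  fixes f fi fij :: "real^'k \<Rightarrow> real"
  assumes inN: "\<And>s t. \<bar>s\<bar> \<le> h \<Longrightarrow> \<bar>t\<bar> \<le> h \<Longrightarrow> u + s *\<^sub>R axis i 1 + t *\<^sub>R axis j 1 \<in> N"
    and h: "h > 0"
    and fi: "\<forall>v\<in>N. ((\<lambda>t. f (v + t *\<^sub>R axis i 1)) has_real_derivative fi v) (at 0)"
    and fij: "\<forall>v\<in>N. ((\<lambda>t. fi (v + t *\<^sub>R axis j 1)) has_real_derivative fij v) (at 0)"
  shows "\<exists>s t. 0 < s \<and> s < h \<and> 0 < t \<and> t < h \<and>
    f (u + h *\<^sub>R axis i 1 + h *\<^sub>R axis j 1) - f (u + h *\<^sub>R axis i 1) - f (u + h *\<^sub>R axis j 1) + f u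
      = h * h * fij (u + s *\<^sub>R axis i 1 + t *\<^sub>R axis j 1)"
proof -
  have dphi: "DERIV (\<lambda>s. f (u + h *\<^sub>R axis j 1 + s *\<^sub>R axis i 1) - f (u + s *\<^sub>R axis i 1)) s :>
      fi (u + h *\<^sub>R axis j 1 + s *\<^sub>R axis i 1) - fi (u + s *\<^sub>R axis i 1)" if "0 \<le> s" "s \<le> h" for s
  proof (rule DERIV_diff)
    have "u + s *\<^sub>R axis i 1 + h *\<^sub>R axis j 1 \<in> N"
      using inN[of s h] that h by simp
    then have m: "u + h *\<^sub>R axis j 1 + s *\<^sub>R axis i 1 \<in> N"
      by (simp add: add.assoc add.commute add.left_commute)
    show "DERIV (\<lambda>s. f (u + h *\<^sub>R axis j 1 + s *\<^sub>R axis i 1)) s :> fi (u + h *\<^sub>R axis j 1 + s *\<^sub>R axis i 1)"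
      by (rule line_deriv[OF fi[rule_format, OF m]])
    have "u + s *\<^sub>R axis i 1 \<in> N"
      using inN[of s 0] that h by simp
    then show "DERIV (\<lambda>s. f (u + s *\<^sub>R axis i 1)) s :> fi (u + s *\<^sub>R axis i 1)"
      by (rule line_deriv[OF fi[rule_format]])
  qed
  obtain s1 where s1: "0 < s1" "s1 < h"
    "(f (u + h *\<^sub>R axis j 1 + h *\<^sub>R axis i 1) - f (u + h *\<^sub>R axis i 1)) -
     (f (u + h *\<^sub>R axis j 1 + 0 *\<^sub>R axis i 1) - f (u + 0 *\<^sub>R axis i 1)) =
     (h - 0) * (fi (u + h *\<^sub>R axis j 1 + s1 *\<^sub>R axis i 1) - fi (u + s1 *\<^sub>R axis i 1))"
    using MVT2[OF h dphi] by blast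
  have dpsi: "DERIV (\<lambda>t. fi (u + s1 *\<^sub>R axis i 1 + t *\<^sub>R axis j 1)) t :> fij (u + s1 *\<^sub>R axis i 1 + t *\<^sub>R axis j 1)"
    if "0 \<le> t" "t \<le> h" for t
  proof -
    have "u + s1 *\<^sub>R axis i 1 + t *\<^sub>R axis j 1 \<in> N"
      using inN[of s1 t] that s1 by simp
    then show ?thesis by (rule line_deriv[OF fij[rule_format]])
  qed
  obtain t1 where t1: "0 < t1" "t1 < h"
    "fi (u + s1 *\<^sub>R axis i 1 + h *\<^sub>R axis j 1) - fi (u + s1 *\<^sub>R axis i 1 + 0 *\<^sub>R axis j 1) =
     (h - 0) * fij (u + s1 *\<^sub>R axis i 1 + t1 *\<^sub>R axis j 1)"
    using MVT2[OF h dpsi] by blast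
  have e1: "u + h *\<^sub>R axis j 1 + h *\<^sub>R axis i 1 = u + h *\<^sub>R axis i 1 + h *\<^sub>R axis j 1"
    by (simp add: add.assoc add.commute add.left_commute)
  have e2: "u + h *\<^sub>R axis j 1 + s1 *\<^sub>R axis i 1 = u + s1 *\<^sub>R axis i 1 + h *\<^sub>R axis j 1"
    by (simp add: add.assoc add.commute add.left_commute)
  show ?thesis
    using s1 t1 unfolding e1 e2 by (intro exI[of _ s1] exI[of _ t1]) (auto simp: algebra_simps)
qed

lemma box_in_ball:
  fixes u :: "real^'k"
  assumes "ball u r \<subseteq> N" "0 < h" "h < r / 2" "\<bar>s\<bar> \<le> h" "\<bar>t\<bar> \<le> h"
  shows "u + s *\<^sub>R axis a 1 + t *\<^sub>R axis b 1 \<in> N"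
proof -
  have "norm (s *\<^sub>R axis a 1 + t *\<^sub>R axis b (1::real)) \<le> norm (s *\<^sub>R axis a (1::real)) + norm (t *\<^sub>R axis b (1::real))"
    by (rule norm_triangle_ineq)
  also have "\<dots> = \<bar>s\<bar> + \<bar>t\<bar>" by simp
  finally have "dist (u + s *\<^sub>R axis a 1 + t *\<^sub>R axis b 1) u < r"
    using assms by (simp add: dist_norm add.assoc)
  then show ?thesis using assms(1) by (auto simp: dist_commute)
qed

lemma dist_box:
  fixes u :: "real^'k"
  assumes "0 < s" "s < h" "0 < t" "t < h"
  shows "dist (u + s *\<^sub>R axis a 1 + t *\<^sub>R axis b 1) u < 2 * h"
proof -
  have "norm (s *\<^sub>R axis a 1 + t *\<^sub>R axis b (1::real)) \<le> norm (s *\<^sub>R axis a (1::real)) + norm (t *\<^sub>R axis b (1::real))"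
    by (rule norm_triangle_ineq)
  also have "\<dots> = \<bar>s\<bar> + \<bar>t\<bar>" by simp
  finally show ?thesis using assms by (simp add: dist_norm add.assoc)
qed

lemma clairaut:
  fixes f fi fj fij fji :: "real^'k \<Rightarrow> real"
  assumes N: "open N" and u: "u \<in> N"
    and fi: "\<forall>v\<in>N. ((\<lambda>t. f (v + t *\<^sub>R axis i 1)) has_real_derivative fi v) (at 0)"
    and fj: "\<forall>v\<in>N. ((\<lambda>t. f (v + t *\<^sub>R axis j 1)) has_real_derivative fj v) (at 0)"
    and fij: "\<forall>v\<in>N. ((\<lambda>t. fi (v + t *\<^sub>R axis j 1)) has_real_derivative fij v) (at 0)"
    and fji: "\<forall>v\<in>N. ((\<lambda>t. fj (v + t *\<^sub>R axis i 1)) has_real_derivative fji v) (at 0)"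
    and c1: "continuous_on N fij" and c2: "continuous_on N fji"
  shows "fij u = fji u"
proof -
  obtain r where r: "r > 0" "ball u r \<subseteq> N" using N u open_contains_ball by blast
  have key: "\<exists>p q. dist p u < 2 * h \<and> dist q u < 2 * h \<and> p \<in> N \<and> q \<in> N \<and> fij p = fji q"
    if h: "0 < h" "h < r / 2" for h
  proof -
    obtain s t where st: "0 < s" "s < h" "0 < t" "t < h"
      "f (u + h *\<^sub>R axis i 1 + h *\<^sub>R axis j 1) - f (u + h *\<^sub>R axis i 1) - f (u + h *\<^sub>R axis j 1) + f u
       = h * h * fij (u + s *\<^sub>R axis i 1 + t *\<^sub>R axis j 1)"
      using mixed_mvt[OF box_in_ball[OF r(2) h] h(1) fi fij] by blast
    obtain s' t' where st': "0 < s'" "s' < h" "0 < t'" "t' < h"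
      "f (u + h *\<^sub>R axis j 1 + h *\<^sub>R axis i 1) - f (u + h *\<^sub>R axis j 1) - f (u + h *\<^sub>R axis i 1) + f u
       = h * h * fji (u + s' *\<^sub>R axis j 1 + t' *\<^sub>R axis i 1)"
      using mixed_mvt[OF box_in_ball[OF r(2) h] h(1) fj fji] by blast
    have e: "u + h *\<^sub>R axis j 1 + h *\<^sub>R axis i 1 = u + h *\<^sub>R axis i 1 + h *\<^sub>R axis j 1"
      by (simp add: add.assoc add.commute add.left_commute)
    have "h * h * fij (u + s *\<^sub>R axis i 1 + t *\<^sub>R axis j 1) = h * h * fji (u + s' *\<^sub>R axis j 1 + t' *\<^sub>R axis i 1)"
      using st(5) st'(5) unfolding e by linarith
    then have eq: "fij (u + s *\<^sub>R axis i 1 + t *\<^sub>R axis j 1) = fji (u + s' *\<^sub>R axis j 1 + t' *\<^sub>R axis i 1)"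
      using h by simp
    show ?thesis
      apply (rule exI[of _ "u + s *\<^sub>R axis i 1 + t *\<^sub>R axis j 1"], rule exI[of _ "u + s' *\<^sub>R axis j 1 + t' *\<^sub>R axis i 1"])
      using dist_box[OF st(1-4)] dist_box[OF st'(1-4)] eq box_in_ball[OF r(2) h] st st' by auto
  qed
  show ?thesis
  proof (rule ccontr)
    assume ne: "fij u \<noteq> fji u"
    define e where "e = \<bar>fij u - fji u\<bar> / 2"
    have e: "e > 0" using ne by (simp add: e_def)
    obtain d1 where d1: "d1 > 0" "\<forall>x'\<in>N. dist x' u < d1 \<longrightarrow> dist (fij x') (fij u) < e"
      using c1 u e unfolding continuous_on_iff by blast
    obtain d2 where d2: "d2 > 0" "\<forall>x'\<in>N. dist x' u < d2 \<longrightarrow> dist (fji x') (fji u) < e"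
      using c2 u e unfolding continuous_on_iff by blast
    define h where "h = min (r / 4) (min d1 d2 / 4)"
    have h: "0 < h" "h < r / 2" "2 * h < d1" "2 * h < d2"
      using r d1 d2 by (auto simp: h_def)
    obtain p q where pq: "dist p u < 2 * h" "dist q u < 2 * h" "p \<in> N" "q \<in> N" "fij p = fji q"
      using key[OF h(1,2)] by blast
    have "dist (fij p) (fij u) < e" using d1 pq h by auto
    moreover have "dist (fji q) (fji u) < e" using d2 pq h by auto
    ultimately have "\<bar>fij u - fji u\<bar> < 2 * e" using pq(5) by (simp add: dist_real_def)
    then show False by (simp add: e_def)
  qed
qed

lemma pdl_swap:
  fixes V :: "real^'k \<Rightarrow> real"
  assumes N: "open N" "0 \<in> N" and Cn: "Cn_on n V N" and len: "length (\<delta> @ i # j # \<rho>) \<le> n"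
  shows "pdl UNIV (\<delta> @ i # j # \<rho>) V 0 = pdl UNIV (\<delta> @ j # i # \<rho>) V 0"
proof -
  have D: "\<And>\<gamma> a. length \<gamma> < n \<Longrightarrow> \<forall>v\<in>N. ((\<lambda>t. pdl UNIV \<gamma> V (v + t *\<^sub>R axis a 1)) has_real_derivative pdl UNIV (a # \<gamma>) V v) (at 0)"
    using Cn unfolding Cn_on_def by blast
  have C: "\<And>\<gamma>. length \<gamma> \<le> n \<Longrightarrow> continuous_on N (pdl UNIV \<gamma> V)"
    using Cn unfolding Cn_on_def by blast
  have l: "length \<rho> < n" "length (i # \<rho>) < n" "length (j # \<rho>) < n"
    "length (j # i # \<rho>) \<le> n" "length (i # j # \<rho>) \<le> n"
    using len by auto
  have eqN: "\<forall>v\<in>N \<inter> UNIV. pdl UNIV (i # j # \<rho>) V v = pdl UNIV (j # i # \<rho>) V v"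
  proof
    fix v assume v: "v \<in> N \<inter> UNIV"
    have "pdl UNIV (j # i # \<rho>) V v = pdl UNIV (i # j # \<rho>) V v"
      by (rule clairaut[OF N(1) _ D[OF l(1)] D[OF l(1)] D[OF l(2)] D[OF l(3)] C[OF l(4)] C[OF l(5)]])
        (use v in simp)
    then show "pdl UNIV (i # j # \<rho>) V v = pdl UNIV (j # i # \<rho>) V v" by simp
  qed
  have "pdl UNIV \<delta> (pdl UNIV (i # j # \<rho>) V) 0 = pdl UNIV \<delta> (pdl UNIV (j # i # \<rho>) V) 0"
    using pdl_local[OF N(1) eqN] N(2) by blast
  then show ?thesis by (simp add: pdl_append)
qed

lemma move_front:
  assumes sw: "\<And>\<delta> i j \<rho>. length (\<delta> @ i # j # \<rho>) = L \<Longrightarrow> F (\<delta> @ i # j # \<rho>) = F (\<delta> @ j # i # \<rho>)"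
  shows "length (\<delta> @ x # ys1 @ ys2) = L \<Longrightarrow> F (\<delta> @ x # ys1 @ ys2) = F (\<delta> @ ys1 @ x # ys2)"
proof (induction ys1 arbitrary: \<delta>)
  case Nil
  then show ?case by simp
next
  case (Cons y ys1)
  have "F (\<delta> @ x # y # ys1 @ ys2) = F (\<delta> @ y # x # ys1 @ ys2)"
    using sw Cons.prems by simp
  also have "\<dots> = F ((\<delta> @ [y]) @ x # ys1 @ ys2)" by simp
  also have "\<dots> = F ((\<delta> @ [y]) @ ys1 @ x # ys2)"
    using Cons.IH[of "\<delta> @ [y]"] Cons.prems by simp
  finally show ?case by simp
qed

lemma perm_inv:
  assumes sw: "\<And>\<delta> i j \<rho>. length (\<delta> @ i # j # \<rho>) = L \<Longrightarrow> F (\<delta> @ i # j # \<rho>) = F (\<delta> @ j # i # \<rho>)"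
  shows "mset xs = mset ys \<Longrightarrow> length (\<delta> @ xs) = L \<Longrightarrow> F (\<delta> @ xs) = F (\<delta> @ ys)"
proof (induction xs arbitrary: \<delta> ys)
  case Nil
  then show ?case by simp
next
  case (Cons x xs)
  have "x \<in> set ys" using Cons.prems(1) by (metis list.set_intros(1) set_mset_mset)
  then obtain ys1 ys2 where ys: "ys = ys1 @ x # ys2" by (meson split_list)
  have m: "mset xs = mset (ys1 @ ys2)" using Cons.prems(1) ys by simp
  have "F (\<delta> @ x # xs) = F ((\<delta> @ [x]) @ xs)" by simp
  also have "\<dots> = F ((\<delta> @ [x]) @ ys1 @ ys2)"
    using Cons.IH[OF m, of "\<delta> @ [x]"] Cons.prems(2) by simp
  also have "\<dots> = F (\<delta> @ x # ys1 @ ys2)" by simp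
  also have "\<dots> = F (\<delta> @ ys1 @ x # ys2)"
  proof (rule move_front[where F=F and L=L, OF sw])
    have "length xs = length (ys1 @ ys2)" by (rule mset_eq_length[OF m])
    then show "length (\<delta> @ x # ys1 @ ys2) = L" using Cons.prems(2) by simp
  qed (auto)
  finally show ?case using ys by simp
qed

lemma count_le: "count (mset xs) a \<le> length xs"
  by (induction xs) auto

lemma count_full: "length xs \<le> count (mset xs) a \<Longrightarrow> y \<in> set xs \<Longrightarrow> y = a"
proof (induction xs)
  case Nil
  then show ?case by simp
next
  case (Cons x xs)
  have c: "count (mset xs) a \<le> length xs" by (rule count_le)
  show ?case
  proof (cases "x = a")
    case True
    then show ?thesis using Cons by auto
  next
    case False
    then show ?thesis using Cons.prems c by simp
  qed
qed

lemma moment_rep: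
  fixes c0 :: "'c::finite" and \<nu> :: "(real^'c) measure"
  shows "moment \<nu> (replicate M c0) = (\<integral>\<beta>. (\<beta> $ c0) ^ M \<partial>\<nu>)"
proof -
  have "(\<Prod>m<M. \<beta> $ (replicate M c0 ! m)) = (\<Prod>m<M. \<beta> $ c0)" for \<beta> :: "real^'c"
    by (rule prod.cong) auto
  then show ?thesis by (simp add: moment_def)
qed

theorem theorem1:
  fixes good :: "'c::finite \<Rightarrow> 'k::finite" and c0 :: 'c and M :: nat
    and S :: "(real^'c) set" and H :: "(real^'c) set"
    and B1 :: "(real^'k) set" and D1 :: "real^'k \<Rightarrow> 'e1 \<Rightarrow> ereal"
    and \<mu>1 :: "'e1 measure" and \<nu>1 :: "(real^'c) measure" and Y1 :: "real^'c \<Rightarrow> real^'c \<Rightarrow> 'e1 \<Rightarrow> real^'k"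
    and B2 :: "(real^'k) set" and D2 :: "real^'k \<Rightarrow> 'e2 \<Rightarrow> ereal"
    and \<mu>2 :: "'e2 measure" and \<nu>2 :: "(real^'c) measure" and Y2 :: "real^'c \<Rightarrow> real^'c \<Rightarrow> 'e2 \<Rightarrow> real^'k"
  assumes "M \<ge> 1"
    and "S = UNIV \<or> S = orthant"
    and "spec_ok good c0 M S B1 D1 \<mu>1 \<nu>1 Y1"
    and "spec_ok good c0 M S B2 D2 \<mu>2 \<nu>2 Y2"
    and "open H" and "0 \<in> H"
    and "\<forall>x\<in>H \<inter> S. ASF \<nu>1 \<mu>1 Y1 x = ASF \<nu>2 \<mu>2 Y2 x"
    and "(\<integral>\<beta>. (\<beta> $ c0) ^ M \<partial>\<nu>1) = (\<integral>\<beta>. (\<beta> $ c0) ^ M \<partial>\<nu>2)"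
  shows "(\<forall>cs. length cs = M \<longrightarrow> moment \<nu>1 cs = moment \<nu>2 cs) \<and>
         (\<forall>\<gamma>::'k list. length \<gamma> = M + 1 \<longrightarrow>
            pdl UNIV \<gamma> (Vfun \<mu>1 B1 D1) 0 = pdl UNIV \<gamma> (Vfun \<mu>2 B2 D2) 0)"
proof -
  note S = assms(2) and ok1 = assms(3) and ok2 = assms(4)
  define W1 where "W1 \<gamma> = pdl UNIV \<gamma> (Vfun \<mu>1 B1 D1) 0" for \<gamma>
  define W2 where "W2 \<gamma> = pdl UNIV \<gamma> (Vfun \<mu>2 B2 D2) 0" for \<gamma>
  define a where "a = good c0"
  have a51: "assm5 S M B1 D1 \<mu>1 \<nu>1 Y1" and a52: "assm5 S M B2 D2 \<mu>2 \<nu>2 Y2"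
    using ok1 ok2 by (auto simp: spec_ok_def)
  obtain N1 where N1: "open N1" "0 \<in> N1" "Cn_on (M + 1) (Vfun \<mu>1 B1 D1) N1"
    using a51 unfolding assm5_def by blast
  obtain N2 where N2: "open N2" "0 \<in> N2" "Cn_on (M + 1) (Vfun \<mu>2 B2 D2) N2"
    using a52 unfolding assm5_def by blast
  have nz1: "\<And>\<gamma>. length \<gamma> = M + 1 \<Longrightarrow> W1 \<gamma> \<noteq> 0"
    using a51 unfolding assm5_def W1_def by blast
  have nz2: "\<And>\<gamma>. length \<gamma> = M + 1 \<Longrightarrow> W2 \<gamma> \<noteq> 0"
    using a52 unfolding assm5_def W2_def by blast
  have Aeq: "W1 (map good cs @ [k]) * moment \<nu>1 cs = W2 (map good cs @ [k]) * moment \<nu>2 cs"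
    if "length cs = M" for cs k
  proof -
    have "\<forall>x\<in>H \<inter> S. pdl S cs (\<lambda>x. ASF \<nu>1 \<mu>1 Y1 x $ k) x = pdl S cs (\<lambda>x. ASF \<nu>2 \<mu>2 Y2 x $ k) x"
      by (rule pdl_local[OF assms(5)]) (use assms(7) in simp)
    then have "pdl S cs (\<lambda>x. ASF \<nu>1 \<mu>1 Y1 x $ k) 0 = pdl S cs (\<lambda>x. ASF \<nu>2 \<mu>2 Y2 x $ k) 0"
      using assms(6) zero_in_S[OF S] by blast
    then show ?thesis
      using formula[OF S ok1 that, of k] formula[OF S ok2 that, of k] by (simp add: W1_def W2_def)
  qed
  have perm1: "\<And>\<gamma> \<gamma>'. mset \<gamma> = mset \<gamma>' \<Longrightarrow> length \<gamma> = M + 1 \<Longrightarrow> W1 \<gamma> = W1 \<gamma>'"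
    using perm_inv[where F=W1 and L="M+1" and \<delta>="[]"] pdl_swap[OF N1(1,2,3)] unfolding W1_def by simp
  have perm2: "\<And>\<gamma> \<gamma>'. mset \<gamma> = mset \<gamma>' \<Longrightarrow> length \<gamma> = M + 1 \<Longrightarrow> W2 \<gamma> = W2 \<gamma>'"
    using perm_inv[where F=W2 and L="M+1" and \<delta>="[]"] pdl_swap[OF N2(1,2,3)] unfolding W2_def by simp
  have m0: "moment \<nu>1 (replicate M c0) = moment \<nu>2 (replicate M c0)" "moment \<nu>1 (replicate M c0) \<noteq> 0"
    using assms(8) ok1 by (auto simp: moment_rep spec_ok_def assm4_def)
  have claim: "\<forall>\<gamma>. length \<gamma> = M + 1 \<longrightarrow> length \<gamma> \<le> count (mset \<gamma>) a + d \<longrightarrow> W1 \<gamma> = W2 \<gamma>" for d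
  proof (induction d)
    case 0
    show ?case
    proof (intro allI impI)
      fix \<gamma> :: "'k list" assume l: "length \<gamma> = M + 1" and c: "length \<gamma> \<le> count (mset \<gamma>) a + 0"
      have "\<gamma> = replicate (M + 1) a"
        by (rule replicate_eqI[OF l]) (use count_full c in auto)
      also have "\<dots> = map good (replicate M c0) @ [a]"
        by (simp add: a_def replicate_append_same)
      finally have g: "\<gamma> = map good (replicate M c0) @ [a]" .
      show "W1 \<gamma> = W2 \<gamma>"
        using Aeq[of "replicate M c0" a] m0 unfolding g by simp
    qed
  next
    case (Suc d)
    show ?case
    proof (intro allI impI)
      fix \<gamma> :: "'k list" assume l: "length \<gamma> = M + 1" and c: "length \<gamma> \<le> count (mset \<gamma>) a + Suc d"
      show "W1 \<gamma> = W2 \<gamma>"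
      proof (cases "length \<gamma> \<le> count (mset \<gamma>) a + d")
        case True
        then show ?thesis using Suc.IH l by blast
      next
        case False
        obtain k where k: "k \<in> set \<gamma>" "k \<noteq> a"
          using False count_le[of \<gamma> a] count_full[of \<gamma> a] by (metis le_add1 le_antisym le_refl replicate_eqI count_replicate_mset
              mset_replicate add_0_right)
        define ks where "ks = remove1 k \<gamma>"
        have lks: "length ks = M" using l k by (simp add: ks_def length_remove1)
        have mk: "mset (ks @ [k]) = mset \<gamma>" using k by (simp add: ks_def)
        have ca: "count (mset (ks @ [a])) a = count (mset \<gamma>) a + 1"
          using k by (simp add: ks_def)
        have "length (ks @ [a]) \<le> count (mset (ks @ [a])) a + d"
          using ca False c l lks by simp
        then have Wa: "W1 (ks @ [a]) = W2 (ks @ [a])"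
          using Suc.IH lks by simp
        obtain cs where cs: "length cs = M" "\<forall>m<M. good (cs ! m) = ks ! m"
          "(\<integral>\<beta>. (\<Prod>m<M. \<beta> $ (cs ! m)) \<partial>\<nu>1) \<noteq> 0"
          using ok1 lks unfolding spec_ok_def assm6_def by blast
        have mcs: "map good cs = ks" using cs lks by (intro nth_equalityI) auto
        have m1: "moment \<nu>1 cs \<noteq> 0" using cs by (simp add: moment_def)
        have "W1 (ks @ [a]) * moment \<nu>1 cs = W2 (ks @ [a]) * moment \<nu>2 cs"
          using Aeq[OF cs(1), of a] mcs by simp
        then have meq: "moment \<nu>1 cs = moment \<nu>2 cs"
          using Wa nz2[of "ks @ [a]"] lks by simp
        have "W1 (ks @ [k]) * moment \<nu>1 cs = W2 (ks @ [k]) * moment \<nu>1 cs"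
          using Aeq[OF cs(1), of k] mcs meq by simp
        then have "W1 (ks @ [k]) = W2 (ks @ [k])" using m1 by simp
        moreover have "W1 \<gamma> = W1 (ks @ [k])" using perm1[of \<gamma> "ks @ [k]"] mk l by simp
        moreover have "W2 \<gamma> = W2 (ks @ [k])" using perm2[of \<gamma> "ks @ [k]"] mk l by simp
        ultimately show ?thesis by simp
      qed
    qed
  qed
  have G2: "W1 \<gamma> = W2 \<gamma>" if "length \<gamma> = M + 1" for \<gamma>
    using claim[of "M + 1"] that by simp
  have G1: "moment \<nu>1 cs = moment \<nu>2 cs" if "length cs = M" for cs
  proof -
    have "W1 (map good cs @ [a]) * moment \<nu>1 cs = W2 (map good cs @ [a]) * moment \<nu>2 cs"
      by (rule Aeq[OF that])
    then show ?thesis using G2[of "map good cs @ [a]"] nz2[of "map good cs @ [a]"] that by simp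
  qed
  show ?thesis using G1 G2 by (simp add: W1_def W2_def)
qed

end
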